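(* Let $k$ be a finite field, $n\ge1$, and $F=T_0G_1+G_0\in k[T_0,\dots,T_n]$ nonzero homogeneous with $G_0,G_1\in k[T_1,\dots,T_n]$ homogeneous and $G_1\ne0$. Then there is a natural bijection \[ X_F(k)=\mathrm{Cone}_p(X_{G_1}\cap X_{G_0})(k)\ \sqcup\ \bigl(\mathbb{P}^{n-1}_k(k)-X_{G_1}(k)\bigr). \]
   Context: $X_F=\mathrm{Proj}\,k[T_0,\dots,T_n]/(F)$, $X_{G_1}=\mathrm{Proj}\,k[T_1,\dots,T_n]/(G_1)\subseteq\mathbb{P}^{n-1}_k=\mathrm{Proj}\,k[T_1,\dots,T_n]$, and $X_{G_1}\cap X_{G_0}=\mathrm{Proj}\,k[T_1,\dots,T_n]/(G_1,G_0)$. For $X=\mathrm{Proj}\,k[T_1,\dots,T_n]/I$, the projective cone with vertex $p=[1:0:\dots:0]$ is $\mathrm{Cone}_p(X)=\mathrm{Proj}\,k[T_0,T_1,\dots,T_n]/I\,k[T_0,\dots,T_n]$. $Y(k)$ denotes the set of $k$-rational points of $Y$. *)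

theory Defs
  imports Main "HOL-Library.Poly_Mapping"
begin

text \<open>Multivariate polynomials in variables T_i (i :: nat) over a ring 'a:
  a finitely supported map from monomials (finitely supported exponent vectors) to coefficients.\<close>
type_synonym 'a mpoly = "(nat \<Rightarrow>\<^sub>0 nat) \<Rightarrow>\<^sub>0 'a"

definition mp_var :: "nat \<Rightarrow> 'a::comm_ring_1 mpoly" where
  "mp_var i = Poly_Mapping.single (Poly_Mapping.single i 1) 1"

definition mp_eval :: "'a::comm_ring_1 mpoly \<Rightarrow> (nat \<Rightarrow> 'a) \<Rightarrow> 'a" where
  "mp_eval P x = (\<Sum>m\<in>Poly_Mapping.keys P. Poly_Mapping.lookup P m * (\<Prod>i\<in>Poly_Mapping.keys m. x i ^ Poly_Mapping.lookup (m::nat \<Rightarrow>\<^sub>0 nat) i))"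

definition mp_in_vars :: "nat set \<Rightarrow> 'a::zero mpoly \<Rightarrow> bool" where
  "mp_in_vars V P \<longleftrightarrow> (\<forall>m\<in>Poly_Mapping.keys P. Poly_Mapping.keys m \<subseteq> V)"

definition mp_homogeneous :: "'a::zero mpoly \<Rightarrow> bool" where
  "mp_homogeneous P \<longleftrightarrow> (\<exists>d. \<forall>m\<in>Poly_Mapping.keys P. (\<Sum>i\<in>Poly_Mapping.keys m. Poly_Mapping.lookup (m::nat \<Rightarrow>\<^sub>0 nat) i) = d)"

text \<open>A k-rational point of a projective space with homogeneous coordinates T_i, i \<in> V,
  is the class of a nonzero vector x (with x i = 0 for i \<notin> V) under scaling.\<close>
definition proj_class :: "(nat \<Rightarrow> 'a::field) \<Rightarrow> (nat \<Rightarrow> 'a) set" where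
  "proj_class x = {y. \<exists>c. c \<noteq> 0 \<and> y = (\<lambda>i. c * x i)}"

definition proj_points :: "nat set \<Rightarrow> 'a::field mpoly set \<Rightarrow> (nat \<Rightarrow> 'a) set set" where
  "proj_points V S = {proj_class x | x. x \<noteq> (\<lambda>_. 0) \<and> (\<forall>i. i \<notin> V \<longrightarrow> x i = 0)
                        \<and> (\<forall>P\<in>S. mp_eval P x = 0)}"

definition X_F_points :: "nat \<Rightarrow> 'a::field mpoly \<Rightarrow> (nat \<Rightarrow> 'a) set set" where
  "X_F_points n F = proj_points {0..n} {F}"

definition sub_points :: "nat \<Rightarrow> 'a::field mpoly set \<Rightarrow> (nat \<Rightarrow> 'a) set set" where
  "sub_points n S = proj_points {1..n} S"

text \<open>Cone_p(X)(k) for X = Proj k[T_1..T_n]/(S), p = [1:0:...:0]: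
  Proj k[T_0..T_n]/(S) k[T_0..T_n].\<close>
definition cone_points :: "nat \<Rightarrow> 'a::field mpoly set \<Rightarrow> (nat \<Rightarrow> 'a) set set" where
  "cone_points n S = proj_points {0..n} S"

definition natural_map :: "'a::field mpoly \<Rightarrow> 'a mpoly \<Rightarrow>
    ((nat \<Rightarrow> 'a) set + (nat \<Rightarrow> 'a) set) \<Rightarrow> (nat \<Rightarrow> 'a) set" where
  "natural_map G0 G1 z = (case z of
      Inl c \<Rightarrow> c
    | Inr y \<Rightarrow> (let x = (SOME x. x \<in> y) in
                 proj_class (x(0 := - mp_eval G0 x / mp_eval G1 x))))"

end

theory Submission imports Defs begin

definition mon :: "(nat \<Rightarrow>\<^sub>0 nat) \<Rightarrow> (nat \<Rightarrow> 'a::comm_ring_1) \<Rightarrow> 'a" where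
  "mon m x = (\<Prod>i\<in>Poly_Mapping.keys m. x i ^ Poly_Mapping.lookup m i)"

lemma mon_super: "finite S \<Longrightarrow> Poly_Mapping.keys m \<subseteq> S \<Longrightarrow> mon m x = (\<Prod>i\<in>S. x i ^ Poly_Mapping.lookup m i)"
  unfolding mon_def by (rule prod.mono_neutral_left) (auto simp: in_keys_iff)

lemma mon_add: "mon (a + b) x = mon a x * mon b x"
proof -
  let ?S = "Poly_Mapping.keys a \<union> Poly_Mapping.keys b"
  have "mon (a+b) x = (\<Prod>i\<in>?S. x i ^ Poly_Mapping.lookup (a+b) i)"
    by (rule mon_super) (auto dest: keys_add[THEN subsetD])
  also have "\<dots> = (\<Prod>i\<in>?S. x i ^ Poly_Mapping.lookup a i) * (\<Prod>i\<in>?S. x i ^ Poly_Mapping.lookup b i)"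
    by (simp add: lookup_add power_add prod.distrib)
  also have "\<dots> = mon a x * mon b x"
    by (subst mon_super[of ?S a], simp, blast, subst mon_super[of ?S b], simp, blast) simp
  finally show ?thesis .
qed

lemma mon_var: "mon (Poly_Mapping.single 0 (Suc 0)) x = x 0"
  by (simp add: mon_def)

lemma eval_super: "finite S \<Longrightarrow> Poly_Mapping.keys P \<subseteq> S \<Longrightarrow> mp_eval P x = (\<Sum>m\<in>S. Poly_Mapping.lookup P m * mon m x)"
  unfolding mp_eval_def mon_def by (rule sum.mono_neutral_left) (auto simp: in_keys_iff)

lemma eval_add: "mp_eval (P + Q) x = mp_eval P x + mp_eval Q x"
proof -
  let ?S = "Poly_Mapping.keys P \<union> Poly_Mapping.keys Q"
  have "mp_eval (P+Q) x = (\<Sum>m\<in>?S. Poly_Mapping.lookup (P+Q) m * mon m x)"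
    by (rule eval_super) (auto dest: keys_add[THEN subsetD])
  also have "\<dots> = (\<Sum>m\<in>?S. Poly_Mapping.lookup P m * mon m x) + (\<Sum>m\<in>?S. Poly_Mapping.lookup Q m * mon m x)"
    by (simp add: lookup_add distrib_right sum.distrib)
  also have "\<dots> = mp_eval P x + mp_eval Q x"
    by (subst eval_super[of ?S P], simp, blast, subst eval_super[of ?S Q], simp, blast) simp
  finally show ?thesis .
qed

lemma eval_single: "mp_eval (Poly_Mapping.single m c) x = c * mon m x"
  by (simp add: mp_eval_def mon_def)

lemma update_eq: "a \<notin> Poly_Mapping.keys f \<Longrightarrow> Poly_Mapping.update a b f = Poly_Mapping.single a b + f"
  by (rule poly_mapping_eqI) (auto simp: lookup_update lookup_add lookup_single when_def in_keys_iff)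

lemma eval_var_mult: "mp_eval (mp_var 0 * G) x = x 0 * mp_eval (G::'a::comm_ring_1 mpoly) x"
proof (induction G rule: update_induct)
  case const
  then show ?case by (simp add: mp_eval_def)
next
  case (update f a b)
  then show ?case
    by (simp add: update_eq distrib_left eval_add mp_var_def mult_single eval_single mon_add mon_var algebra_simps)
qed

lemma mon_scale: "mon m (\<lambda>i. c * x i) = c ^ (\<Sum>i\<in>Poly_Mapping.keys m. Poly_Mapping.lookup m i) * mon m x"
  by (simp add: mon_def power_mult_distrib prod.distrib power_sum)

lemma eval_scale:
  assumes "mp_homogeneous P"
  obtains d where "\<And>c x. mp_eval P (\<lambda>i. c * x i) = c ^ d * mp_eval (P::'a::comm_ring_1 mpoly) x"
proof -
  from assms obtain d where d: "\<And>m. m \<in> Poly_Mapping.keys P \<Longrightarrow> (\<Sum>i\<in>Poly_Mapping.keys m. Poly_Mapping.lookup m i) = d"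
    unfolding mp_homogeneous_def by blast
  have "mp_eval P (\<lambda>i. c * x i) = c ^ d * mp_eval P x" for c x
    unfolding mp_eval_def mon_def[symmetric]
    by (simp add: mon_scale d sum_distrib_left algebra_simps cong: sum.cong)
  then show ?thesis using that by blast
qed

lemma eval_vars:
  assumes "mp_in_vars V P" "\<And>i. i \<in> V \<Longrightarrow> x i = y i"
  shows "mp_eval P x = mp_eval P y"
  unfolding mp_eval_def
  by (rule sum.cong[OF refl], rule arg_cong[where f="(*) _"], rule prod.cong[OF refl])
     (use assms in \<open>fastforce simp: mp_in_vars_def\<close>)

lemma pc_mem: "x \<in> proj_class x"
  unfolding proj_class_def by (rule CollectI, rule exI[of _ 1]) simp

lemma pc_scale: "(c::'a::field) \<noteq> 0 \<Longrightarrow> proj_class (\<lambda>i. c * x i) = proj_class x"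
  unfolding proj_class_def
proof (intro set_eqI iffI; clarsimp)
  fix d :: 'a assume "c \<noteq> 0" "d \<noteq> 0"
  then show "\<exists>e. e \<noteq> 0 \<and> (\<lambda>i. d * (c * x i)) = (\<lambda>i. e * x i)"
    by (intro exI[of _ "d*c"]) (auto simp: mult.assoc)
next
  fix d :: 'a assume "c \<noteq> 0" "d \<noteq> 0"
  then show "\<exists>e. e \<noteq> 0 \<and> (\<lambda>i. d * x i) = (\<lambda>i. e * (c * x i))"
    by (intro exI[of _ "d/c"]) auto
qed

lemma pc_eq: "proj_class x = proj_class y \<Longrightarrow> \<exists>c. c \<noteq> 0 \<and> y = (\<lambda>i. c * x i)"
  using pc_mem[of y] unfolding proj_class_def by auto

theorem proposition5p5:
  fixes F G0 G1 :: "'a::field mpoly" and n :: nat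
  assumes "finite (UNIV :: 'a set)"
    and "n \<ge> 1"
    and "F \<noteq> 0" and "mp_homogeneous F"
    and "F = mp_var 0 * G1 + G0"
    and "mp_in_vars {1..n} G0" and "mp_homogeneous G0"
    and "mp_in_vars {1..n} G1" and "mp_homogeneous G1"
    and "G1 \<noteq> 0"
  shows "bij_betw (natural_map G0 G1)
           (cone_points n {G1, G0} <+> ((sub_points n {} - sub_points n {G1})))
           (X_F_points n F)"
proof -
  note hG0 = assms(6) and hG1 = assms(8)
  have evF: "mp_eval F z = z 0 * mp_eval G1 z + mp_eval G0 z" for z
    using assms(5) by (simp add: eval_add eval_var_mult)
  have inv0: "mp_eval G (z(0 := t)) = mp_eval G z" if "G = G0 \<or> G = G1" for G z t
    using that eval_vars[OF hG0, of "z(0:=t)" z] eval_vars[OF hG1, of "z(0:=t)" z] by auto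
  obtain d1 where sc1: "\<And>c x. mp_eval G1 (\<lambda>i. c * x i) = c ^ d1 * mp_eval G1 x"
    using eval_scale[OF assms(9)] by blast
  obtain dF where scF: "\<And>c x. mp_eval F (\<lambda>i. c * x i) = c ^ dF * mp_eval F x"
    using eval_scale[OF assms(4)] by blast
  define A where "A = cone_points n {G1, G0}"
  define B where "B = sub_points n {} - sub_points n {G1}"
  define X where "X = X_F_points n F"
  define lift where "lift s = s(0 := - mp_eval G0 s / mp_eval G1 s)" for s :: "nat \<Rightarrow> 'a"
  have nm_inr: "natural_map G0 G1 (Inr y) = proj_class (lift (SOME x. x \<in> y))" for y
    by (simp add: natural_map_def lift_def Let_def)
  have nm_inl: "natural_map G0 G1 (Inl a) = a" for a
    by (simp add: natural_map_def)
  have Bmem: "s \<noteq> (\<lambda>_. 0) \<and> (\<forall>i. i \<notin> {1..n} \<longrightarrow> s i = 0) \<and> mp_eval G1 s \<noteq> 0 \<and> proj_class s = y"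
    if y: "y \<in> B" and s: "s \<in> y" for y s
  proof -
    from y obtain w where w: "y = proj_class w" "w \<noteq> (\<lambda>_. 0)" "\<forall>i. i \<notin> {1..n} \<longrightarrow> w i = 0"
      unfolding B_def sub_points_def proj_points_def by auto
    from s w obtain c where c: "c \<noteq> 0" "s = (\<lambda>i. c * w i)" unfolding proj_class_def by auto
    have ps: "proj_class s = y" using c w pc_scale by simp
    have s0: "s \<noteq> (\<lambda>_. 0)" using c w(2) by (auto simp: fun_eq_iff)
    have s1: "\<forall>i. i \<notin> {1..n} \<longrightarrow> s i = 0" using c w by auto
    have "mp_eval G1 s \<noteq> 0"
    proof
      assume "mp_eval G1 s = 0"
      then have "proj_class s \<in> sub_points n {G1}"
        unfolding sub_points_def proj_points_def using s0 s1 by blast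
      then show False using y ps unfolding B_def by auto
    qed
    then show ?thesis using ps s0 s1 by blast
  qed
  have Bsome: "(SOME x. x \<in> y) \<in> y" if "y \<in> B" for y
    using that unfolding B_def sub_points_def proj_points_def by (auto intro: someI_ex[of "\<lambda>z. z \<in> _"] pc_mem)
  have lift_props: "lift s \<noteq> (\<lambda>_. 0) \<and> (\<forall>i. i \<notin> {0..n} \<longrightarrow> lift s i = 0) \<and> mp_eval F (lift s) = 0
      \<and> mp_eval G1 (lift s) = mp_eval G1 s \<and> (\<forall>i. i \<noteq> 0 \<longrightarrow> lift s i = s i)"
    if "s \<noteq> (\<lambda>_. 0)" "\<forall>i. i \<notin> {1..n} \<longrightarrow> s i = 0" "mp_eval G1 s \<noteq> 0" for s
  proof -
    have e1: "mp_eval G1 (lift s) = mp_eval G1 s" "mp_eval G0 (lift s) = mp_eval G0 s"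
      unfolding lift_def using inv0 by auto
    from that(1) obtain j where j: "s j \<noteq> 0" by auto
    with that(2) have "j \<noteq> 0" by (metis atLeastAtMost_iff le_numeral_extra(2))
    then have "lift s j \<noteq> 0" using j by (simp add: lift_def)
    then have "lift s \<noteq> (\<lambda>_. 0)" by auto
    moreover have "\<forall>i. i \<notin> {0..n} \<longrightarrow> lift s i = 0" using that(2) by (auto simp: lift_def)
    moreover have "mp_eval F (lift s) = 0" using that(3) by (simp add: evF e1) (simp add: lift_def)
    ultimately show ?thesis using e1 by (simp add: lift_def)
  qed
  have imgB: "natural_map G0 G1 (Inr y) \<in> X" if "y \<in> B" for y
  proof -
    let ?s = "SOME x. x \<in> y"
    have "?s \<noteq> (\<lambda>_. 0) \<and> (\<forall>i. i \<notin> {1..n} \<longrightarrow> ?s i = 0) \<and> mp_eval G1 ?s \<noteq> 0"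
      using Bmem[OF that Bsome[OF that]] by blast
    then have "lift ?s \<noteq> (\<lambda>_. 0) \<and> (\<forall>i. i \<notin> {0..n} \<longrightarrow> lift ?s i = 0) \<and> mp_eval F (lift ?s) = 0"
      using lift_props by blast
    then show ?thesis unfolding nm_inr X_def X_F_points_def proj_points_def by blast
  qed
  have imgA: "natural_map G0 G1 (Inl a) \<in> X" if "a \<in> A" for a
    using that unfolding A_def nm_inl X_def X_F_points_def cone_points_def proj_points_def
    by (auto simp: evF)
  have disj: "natural_map G0 G1 (Inl a) \<noteq> natural_map G0 G1 (Inr y)" if "a \<in> A" "y \<in> B" for a y
  proof
    assume eq: "natural_map G0 G1 (Inl a) = natural_map G0 G1 (Inr y)"
    from that(1) obtain x where x: "a = proj_class x" "mp_eval G1 x = 0"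
      unfolding A_def cone_points_def proj_points_def by auto
    let ?s = "SOME x. x \<in> y"
    have "?s \<noteq> (\<lambda>_. 0) \<and> (\<forall>i. i \<notin> {1..n} \<longrightarrow> ?s i = 0) \<and> mp_eval G1 ?s \<noteq> 0"
      using Bmem[OF that(2) Bsome[OF that(2)]] by blast
    then have L: "mp_eval G1 (lift ?s) \<noteq> 0" using lift_props by auto
    from eq have "proj_class x = proj_class (lift ?s)" by (simp add: nm_inl nm_inr x)
    then obtain c where "lift ?s = (\<lambda>i. c * x i)" using pc_eq by blast
    then have "mp_eval G1 (lift ?s) = 0" using sc1 x(2) by simp
    with L show False by simp
  qed
  have injB: "y = y'" if "y \<in> B" "y' \<in> B" "natural_map G0 G1 (Inr y) = natural_map G0 G1 (Inr y')" for y y'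
  proof -
    let ?s = "SOME x. x \<in> y" and ?t = "SOME x. x \<in> y'"
    have S: "?s \<noteq> (\<lambda>_. 0) \<and> (\<forall>i. i \<notin> {1..n} \<longrightarrow> ?s i = 0) \<and> mp_eval G1 ?s \<noteq> 0 \<and> proj_class ?s = y"
      using Bmem[OF that(1) Bsome[OF that(1)]] by blast
    have T: "?t \<noteq> (\<lambda>_. 0) \<and> (\<forall>i. i \<notin> {1..n} \<longrightarrow> ?t i = 0) \<and> mp_eval G1 ?t \<noteq> 0 \<and> proj_class ?t = y'"
      using Bmem[OF that(2) Bsome[OF that(2)]] by blast
    from that(3) have "proj_class (lift ?s) = proj_class (lift ?t)" by (simp add: nm_inr)
    then obtain c where c: "c \<noteq> 0" "lift ?t = (\<lambda>i. c * lift ?s i)" using pc_eq by blast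
    have "?t = (\<lambda>i. c * ?s i)"
    proof (rule ext)
      fix i show "?t i = c * ?s i"
      proof (cases "i = 0")
        case True then show ?thesis using S T by auto
      next
        case False
        then have "lift ?t i = ?t i" "lift ?s i = ?s i" using S T lift_props by blast+
        then show ?thesis using c(2) by (metis)
      qed
    qed
    then have "proj_class ?t = proj_class ?s" using pc_scale c(1) by simp
    then show ?thesis using S T by simp
  qed
  have inj: "inj_on (natural_map G0 G1) (A <+> B)"
  proof (rule inj_onI)
    fix u v assume u: "u \<in> A <+> B" and v: "v \<in> A <+> B" and eq: "natural_map G0 G1 u = natural_map G0 G1 v"
    show "u = v"
      using u v
    proof (elim PlusE)
      fix a b assume "a \<in> A" "b \<in> A" "u = Inl a" "v = Inl b" then show ?thesis using eq by (simp add: nm_inl)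
    next
      fix a y assume "a \<in> A" "y \<in> B" "u = Inl a" "v = Inr y" then show ?thesis using eq disj by auto
    next
      fix a y assume "y \<in> B" "a \<in> A" "u = Inr y" "v = Inl a" then show ?thesis using eq disj by metis
    next
      fix y y' assume "y \<in> B" "y' \<in> B" "u = Inr y" "v = Inr y'" then show ?thesis using eq injB by auto
    qed
  qed
  have sub1: "natural_map G0 G1 ` (A <+> B) \<subseteq> X"
    using imgA imgB by auto
  have sub2: "X \<subseteq> natural_map G0 G1 ` (A <+> B)"
  proof
    fix p assume "p \<in> X"
    then obtain x where x: "p = proj_class x" "x \<noteq> (\<lambda>_. 0)" "\<forall>i. i \<notin> {0..n} \<longrightarrow> x i = 0" "mp_eval F x = 0"
      unfolding X_def X_F_points_def proj_points_def by auto
    show "p \<in> natural_map G0 G1 ` (A <+> B)"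
    proof (cases "mp_eval G1 x = 0")
      case True
      then have "mp_eval G0 x = 0" using x(4) evF by simp
      then have "p \<in> A" unfolding A_def cone_points_def proj_points_def using x True by auto
      then show ?thesis by (metis InlI image_eqI nm_inl)
    next
      case False
      define w where "w = x(0 := 0)"
      have w1: "mp_eval G1 w = mp_eval G1 x" "mp_eval G0 w = mp_eval G0 x" unfolding w_def using inv0 by auto
      have wsupp: "\<forall>i. i \<notin> {1..n} \<longrightarrow> w i = 0" using x(3) by (auto simp: w_def)
      have wnz: "w \<noteq> (\<lambda>_. 0)"
      proof
        assume w0: "w = (\<lambda>_. 0)"
        have "mp_eval F (\<lambda>i. 0 * x i) = 0" using scF[of 0 x] x(4) by (simp del: mult_zero_left)
        moreover have "(\<lambda>i. (0::'a) * x i) = w" using w0 by auto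
        ultimately have "mp_eval F w = 0" by simp
        then have "mp_eval G0 w = 0" using evF w0 by simp
        then have "x 0 * mp_eval G1 x = 0" using x(4) evF w1 by simp
        then have "x 0 = 0" using False by simp
        then have "x = w" unfolding w_def by auto
        with w0 x(2) show False by simp
      qed
      define y where "y = proj_class w"
      have yB: "y \<in> B"
      proof -
        have "y \<in> sub_points n {}" unfolding y_def sub_points_def proj_points_def using wnz wsupp by auto
        moreover have "y \<notin> sub_points n {G1}"
        proof
          assume "y \<in> sub_points n {G1}"
          then obtain w' where "y = proj_class w'" "mp_eval G1 w' = 0"
            unfolding sub_points_def proj_points_def by auto
          then obtain c where "c \<noteq> 0" "w = (\<lambda>i. c * w' i)" using pc_eq y_def by metis
          then have "mp_eval G1 w = 0" using sc1 \<open>mp_eval G1 w' = 0\<close> by simp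
          then show False using w1 False by simp
        qed
        ultimately show ?thesis unfolding B_def by simp
      qed
      let ?s = "SOME x. x \<in> y"
      have "?s \<in> y" using Bsome[OF yB] .
      then obtain c where c: "c \<noteq> 0" "?s = (\<lambda>i. c * w i)" unfolding y_def proj_class_def by auto
      have S: "?s \<noteq> (\<lambda>_. 0) \<and> (\<forall>i. i \<notin> {1..n} \<longrightarrow> ?s i = 0) \<and> mp_eval G1 ?s \<noteq> 0"
        using Bmem[OF yB Bsome[OF yB]] by blast
      have "lift ?s = (\<lambda>i. c * x i)"
      proof (rule ext)
        fix i show "lift ?s i = c * x i"
        proof (cases "i = 0")
          case False
          then show ?thesis using c(2) by (simp add: lift_def w_def)
        next
          case True
          have cx: "(\<lambda>i. c * x i) = (?s)(0 := c * x 0)" using c(2) by (auto simp: w_def)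
          have "mp_eval F (\<lambda>i. c * x i) = 0" using scF x(4) by simp
          then have "(c * x 0) * mp_eval G1 ?s + mp_eval G0 ?s = 0"
            using evF[of "(\<lambda>i. c * x i)"] inv0[of G1 ?s "c * x 0"] inv0[of G0 ?s "c * x 0"] cx by simp
          then have "c * x 0 = - mp_eval G0 ?s / mp_eval G1 ?s" using S
            by (simp add: field_simps eq_neg_iff_add_eq_0)
          then show ?thesis using True by (simp add: lift_def)
        qed
      qed
      then have "natural_map G0 G1 (Inr y) = p" using nm_inr pc_scale c(1) x(1) by simp
      then show ?thesis using yB by (metis InrI image_eqI)
    qed
  qed
  show ?thesis unfolding A_def[symmetric] B_def[symmetric] X_def[symmetric] bij_betw_def
    using inj sub1 sub2 by blast
qed

end
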